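(* Let $(S,K,I)$ be a split graph. If the factor graph $\Phi(S)$ contains an induced path $v_1v_2v_3$ such that $d_1\leq d_2$ and $\sigma_{23}=1$, then: (1) $N_1-N_2=\{x\}=N_3-N_2$ for some vertex $x$ of $S$; (2) $N_3=\{x\}\dot\cup(N_2\cap N_3)\subsetneq N_1\cup N_2$; (3) $\sigma_{12}=d_2-d_1+1$.
   Context: A split graph $(S,K,I)$ is a graph $S$ together with a fixed partition $V(S)=K\dot\cup I$, where $K$ is a clique and $I$ is an independent set. For a vertex $v_i$ of $S$, $N_i$ denotes its open neighborhood in $S$ and $d_i=|N_i|$; $\eta_{uv}=|N_u\cap N_v|$. The factor graph $\Phi(S)$ is the loopless multigraph with vertex set $I$ in which, for distinct $u,v\in I$, there is one edge joining $u$ and $v$ for each 2-switch of $S$ acting on $u$ and $v$ (a 2-switch replaces edges $ab,cd$ with $ac,bd$ when $ab,cd\in E(S)$ and $ac,bd\notin E(S)$); equivalently, the multiplicity of $uv$ is $\sigma_{uv}=(d_u-\eta_{uv})(d_v-\eta_{uv})$, and $u,v$ are adjacent iff $\sigma_{uv}>0$; $\sigma_{ij}$ denotes $\sigma_{v_iv_j}$. An induced path in $\Phi(S)$ consists of distinct vertices with consecutive ones adjacent and no other pair adjacent (multiplicities ignored). *)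

theory Defs
  imports Main
begin

definition simple_graph :: "'a set \<Rightarrow> ('a \<Rightarrow> 'a \<Rightarrow> bool) \<Rightarrow> bool" where
  "simple_graph V E \<longleftrightarrow> finite V \<and> (\<forall>u v. E u v \<longrightarrow> u \<in> V \<and> v \<in> V)
     \<and> (\<forall>u v. E u v \<longrightarrow> E v u) \<and> (\<forall>u. \<not> E u u)"

definition split_graph :: "'a set \<Rightarrow> ('a \<Rightarrow> 'a \<Rightarrow> bool) \<Rightarrow> 'a set \<Rightarrow> 'a set \<Rightarrow> bool" where
  "split_graph V E K I \<longleftrightarrow> simple_graph V E \<and> V = K \<union> I \<and> K \<inter> I = {}
     \<and> (\<forall>u\<in>K. \<forall>v\<in>K. u \<noteq> v \<longrightarrow> E u v)
     \<and> (\<forall>u\<in>I. \<forall>v\<in>I. \<not> E u v)"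

definition nbhd :: "'a set \<Rightarrow> ('a \<Rightarrow> 'a \<Rightarrow> bool) \<Rightarrow> 'a \<Rightarrow> 'a set" where
  "nbhd V E v = {u \<in> V. E v u}"

definition deg :: "'a set \<Rightarrow> ('a \<Rightarrow> 'a \<Rightarrow> bool) \<Rightarrow> 'a \<Rightarrow> nat" where
  "deg V E v = card (nbhd V E v)"

definition eta :: "'a set \<Rightarrow> ('a \<Rightarrow> 'a \<Rightarrow> bool) \<Rightarrow> 'a \<Rightarrow> 'a \<Rightarrow> nat" where
  "eta V E u v = card (nbhd V E u \<inter> nbhd V E v)"

text \<open>Multiplicity of the edge uv in the factor graph Phi(S) (u, v distinct in I).\<close>
definition sigma :: "'a set \<Rightarrow> ('a \<Rightarrow> 'a \<Rightarrow> bool) \<Rightarrow> 'a \<Rightarrow> 'a \<Rightarrow> nat" where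
  "sigma V E u v = (deg V E u - eta V E u v) * (deg V E v - eta V E u v)"

definition factor_adj :: "'a set \<Rightarrow> ('a \<Rightarrow> 'a \<Rightarrow> bool) \<Rightarrow> 'a set \<Rightarrow> 'a \<Rightarrow> 'a \<Rightarrow> bool" where
  "factor_adj V E I u v \<longleftrightarrow> u \<in> I \<and> v \<in> I \<and> u \<noteq> v \<and> sigma V E u v > 0"

definition factor_induced_P3 ::
  "'a set \<Rightarrow> ('a \<Rightarrow> 'a \<Rightarrow> bool) \<Rightarrow> 'a set \<Rightarrow> 'a \<Rightarrow> 'a \<Rightarrow> 'a \<Rightarrow> bool" where
  "factor_induced_P3 V E I v1 v2 v3 \<longleftrightarrow>
     v1 \<in> I \<and> v2 \<in> I \<and> v3 \<in> I \<and> v1 \<noteq> v2 \<and> v2 \<noteq> v3 \<and> v1 \<noteq> v3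
     \<and> factor_adj V E I v1 v2 \<and> factor_adj V E I v2 v3 \<and> \<not> factor_adj V E I v1 v3"

end

theory Submission
  imports Defs
begin

lemma card_split: "finite A \<Longrightarrow> card A = card (A - B) + card (A \<inter> B)"
proof -
  assume f: "finite A"
  have "A = (A - B) \<union> (A \<inter> B)" by blast
  hence "card A = card ((A - B) \<union> (A \<inter> B))" by (rule arg_cong)
  also have "... = card (A - B) + card (A \<inter> B)" using f by (intro card_Un_disjoint) auto
  finally show ?thesis .
qed

lemma key:
  fixes A B C :: "'a set"
  assumes fA: "finite A" and fB: "finite B" and fC: "finite C"
    and cb: "card (C - B) = 1" and bc: "card (B - C) = 1"
    and ac: "card (A - C) = 0 \<or> card (C - A) = 0"
    and ab: "card (A - B) > 0" and ba: "card (B - A) > 0"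
    and le: "card A \<le> card B"
  shows "\<exists>x. A - B = {x} \<and> C - B = {x} \<and> C = {x} \<union> (B \<inter> C) \<and> x \<notin> B \<inter> C
    \<and> C \<subset> A \<union> B \<and> card (A - B) * card (B - A) = card B - card A + 1"
proof -
  have AC: "A \<subseteq> C"
  proof (cases "card (A - C) = 0")
    case True
    then show ?thesis using fA by auto
  next
    case False
    with ac have "card (C - A) = 0" by simp
    hence CA: "C \<subseteq> A" using fC by auto
    have c1: "card C = card (C - B) + card (C \<inter> B)"
      using fC by (rule card_split)
    have c2: "card B = card (B - C) + card (B \<inter> C)"
      using fB by (rule card_split)
    have "card C = card B" using c1 c2 cb bc by (simp add: Int_commute)
    moreover have "card C \<le> card A" using CA fA card_mono by blast
    ultimately have "card A = card C" using le by simp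
    hence "C = A" using card_subset_eq[OF fA CA] by simp
    thus ?thesis by simp
  qed
  from card_1_singleton_iff[THEN iffD1, OF cb[unfolded One_nat_def]] obtain x where x: "C - B = {x}" by (rule exE)
  have "A - B \<subseteq> {x}" using AC x by blast
  moreover have "A - B \<noteq> {}" using ab by (intro notI) simp
  ultimately have AB: "A - B = {x}" by blast
  from card_1_singleton_iff[THEN iffD1, OF bc[unfolded One_nat_def]] obtain y where y: "B - C = {y}" by (rule exE)
  have s1: "C = {x} \<union> (B \<inter> C)" using x by blast
  have s2: "x \<notin> B \<inter> C" using x by blast
  have s3: "C \<subset> A \<union> B"
  proof -
    have "C \<subseteq> A \<union> B" using x AB by blast
    moreover have "y \<in> A \<union> B" "y \<notin> C" using y by blast+
    ultimately show ?thesis by blast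
  qed
  have cA: "card A = card (A \<inter> B) + 1"
  proof -
    have "card A = card (A - B) + card (A \<inter> B)"
      using fA by (rule card_split)
    thus ?thesis using AB by simp
  qed
  have cBA: "card (B - A) = card B - card (A \<inter> B)"
    using card_split[OF fB, of A] by (simp add: Int_commute)
  have "card (A - B) * card (B - A) = card B - card A + 1"
    using AB cBA cA le by simp
  note eq = this
  show ?thesis by (rule exI[of _ x], (rule conjI AB x s1 s2 s3 eq)+)
qed

theorem proposition4p4:
  fixes V K I :: "'a set" and E :: "'a \<Rightarrow> 'a \<Rightarrow> bool" and v1 v2 v3 :: 'a
  assumes "split_graph V E K I"
    and "factor_induced_P3 V E I v1 v2 v3"
    and "deg V E v1 \<le> deg V E v2"
    and "sigma V E v2 v3 = 1"
  shows "\<exists>x\<in>V.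
      nbhd V E v1 - nbhd V E v2 = {x} \<and> nbhd V E v3 - nbhd V E v2 = {x}
    \<and> nbhd V E v3 = {x} \<union> (nbhd V E v2 \<inter> nbhd V E v3)
    \<and> x \<notin> nbhd V E v2 \<inter> nbhd V E v3
    \<and> nbhd V E v3 \<subset> nbhd V E v1 \<union> nbhd V E v2
    \<and> sigma V E v1 v2 = deg V E v2 - deg V E v1 + 1"
proof -
  have fV: "finite V" using assms(1) unfolding split_graph_def simple_graph_def by blast
  have fin: "\<And>v. finite (nbhd V E v)" using fV unfolding nbhd_def by simp
  have sub: "\<And>v. nbhd V E v \<subseteq> V" unfolding nbhd_def by blast
  have sg: "\<And>u v. sigma V E u v = card (nbhd V E u - nbhd V E v) * card (nbhd V E v - nbhd V E u)"
  proof -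
    fix u v
    have "card (nbhd V E u - nbhd V E v) = card (nbhd V E u) - card (nbhd V E u \<inter> nbhd V E v)"
      using card_split[OF fin[of u], of "nbhd V E v"] by simp
    moreover have "card (nbhd V E v - nbhd V E u) = card (nbhd V E v) - card (nbhd V E u \<inter> nbhd V E v)"
      using card_split[OF fin[of v], of "nbhd V E u"] by (simp add: Int_commute)
    ultimately show "sigma V E u v = card (nbhd V E u - nbhd V E v) * card (nbhd V E v - nbhd V E u)"
      unfolding sigma_def deg_def eta_def by simp
  qed
  let ?A = "nbhd V E v1" and ?B = "nbhd V E v2" and ?C = "nbhd V E v3"
  have p: "sigma V E v1 v2 > 0" "sigma V E v2 v3 > 0" "\<not> sigma V E v1 v3 > 0"
    using assms(2) unfolding factor_induced_P3_def factor_adj_def by auto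
  have cb: "card (?C - ?B) = 1" and bc: "card (?B - ?C) = 1"
    using assms(4) sg[of v2 v3] by simp_all
  have ac: "card (?A - ?C) = 0 \<or> card (?C - ?A) = 0" using p(3) sg[of v1 v3] by simp
  have ab: "card (?A - ?B) > 0" "card (?B - ?A) > 0" using p(1) sg[of v1 v2] by simp_all
  have le: "card ?A \<le> card ?B" using assms(3) unfolding deg_def .
  from key[OF fin fin fin cb bc ac ab le] obtain x where xx: "?A - ?B = {x} \<and> ?C - ?B = {x} \<and> ?C = {x} \<union> (?B \<inter> ?C)
    \<and> x \<notin> ?B \<inter> ?C \<and> ?C \<subset> ?A \<union> ?B
    \<and> card (?A - ?B) * card (?B - ?A) = card ?B - card ?A + 1" by (rule exE)
  have x1: "?A - ?B = {x}" using xx by (elim conjE) assumption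
  have x2: "?C - ?B = {x}" using xx by (elim conjE) assumption
  have x3: "?C = {x} \<union> (?B \<inter> ?C)" using xx by (elim conjE) assumption
  have x4: "x \<notin> ?B \<inter> ?C" using xx by (elim conjE) assumption
  have x5: "?C \<subset> ?A \<union> ?B" using xx by (elim conjE) assumption
  have x6: "card (?A - ?B) * card (?B - ?A) = card ?B - card ?A + 1" using xx by (elim conjE) assumption
  have xV: "x \<in> V" using x1 sub by blast
  have e: "sigma V E v1 v2 = deg V E v2 - deg V E v1 + 1"
    unfolding deg_def by (simp only: sg x6)
  show ?thesis
    apply (rule bexI)
     prefer 2 apply (rule xV)
    by (rule conjI x1 x2 x3 x4 x5 e)+
qed

end
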